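(* Let $\mathbf{w}$ be an infinite overlap-free word over the alphabet $\{0,1\}$. Then there is a position $i$ such that no square (nonempty word of the form $xx$) occurs in $\mathbf{w}$ beginning at position $i$.
   Context: A finite word $w$ is an $\alpha$-power ($\alpha$ rational) if $w = x^n x'$ with $x'$ a prefix of $x$, $x$ nonempty, and $\alpha = n + |x'|/|x|$. A square is a $2$-power, i.e. a word $xx$ with $x$ nonempty. An overlap is a word that is a $\beta$-power for some $\beta > 2$. A (finite or infinite) word is overlap-free if none of its factors (contiguous subwords) is an overlap. *)

theory Defs
  imports Complex_Main "HOL-Library.Sublist"
begin

(* Infinite words over an alphabet 'a are functions nat \<Rightarrow> 'a; positions start at 0.
   The binary alphabet {0,1} is represented by bool. Finite words are lists. *)

definition factor :: "(nat \<Rightarrow> 'a) \<Rightarrow> nat \<Rightarrow> nat \<Rightarrow> 'a list" where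
  "factor w i n = map w [i..<i+n]"

definition is_power :: "'a list \<Rightarrow> rat \<Rightarrow> bool" where
  "is_power u \<alpha> \<longleftrightarrow> (\<exists>x x' n. x \<noteq> [] \<and> prefix x' x \<and>
       u = concat (replicate n x) @ x' \<and>
       \<alpha> = of_nat n + of_nat (length x') / of_nat (length x))"

definition overlap :: "'a list \<Rightarrow> bool" where
  "overlap u \<longleftrightarrow> (\<exists>\<beta>. \<beta> > 2 \<and> is_power u \<beta>)"

definition overlap_free_inf :: "(nat \<Rightarrow> 'a) \<Rightarrow> bool" where
  "overlap_free_inf w \<longleftrightarrow> (\<forall>i n. \<not> overlap (factor w i n))"

definition square_at :: "(nat \<Rightarrow> 'a) \<Rightarrow> nat \<Rightarrow> bool" where
  "square_at w i \<longleftrightarrow> (\<exists>x. x \<noteq> [] \<and> factor w i (2 * length x) = x @ x)"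

end

theory Submission
  imports Defs
begin

lemma factor_nth: "k < n \<Longrightarrow> factor w j n ! k = w (j+k)"
  by (simp add: factor_def del: upt_Suc)

lemma factor_len[simp]: "length (factor w j n) = n"
  by (simp add: factor_def)

lemma periodP:
  fixes w :: "nat \<Rightarrow> 'a"
  assumes of: "overlap_free_inf w" and q: "q > 0"
    and per: "\<And>k. k \<le> q \<Longrightarrow> w (j+k) = w (j+k+q)"
  shows False
proof -
  let ?x = "factor w j q"
  have eq: "factor w j (2*q+1) = concat (replicate 2 ?x) @ [w j]"
  proof (rule nth_equalityI)
    show "length (factor w j (2*q+1)) = length (concat (replicate 2 ?x) @ [w j])"
      by (simp add: factor_def numeral_2_eq_2)
    fix k assume "k < length (factor w j (2*q+1))"
    hence k: "k < 2*q+1" by (simp add: factor_def)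
    have lhs: "factor w j (2*q+1) ! k = w (j+k)" using k by (rule factor_nth)
    consider "k < q" | "q \<le> k" "k < 2*q" | "k = 2*q" using k by linarith
    then show "factor w j (2*q+1) ! k = (concat (replicate 2 ?x) @ [w j]) ! k"
    proof cases
      case 1
      then show ?thesis using lhs by (simp add: factor_nth numeral_2_eq_2 nth_append)
    next
      case 2
      have "w (j + (k-q)) = w (j + (k-q) + q)" using per[of "k-q"] 2 by (simp add: eval_nat_numeral)
      moreover have "j + (k-q) + q = j + k" using 2 by (simp add: eval_nat_numeral)
      moreover have "k - q < q" using 2 by (simp add: eval_nat_numeral)
      ultimately show ?thesis using lhs 2 by (simp add: factor_nth numeral_2_eq_2 nth_append)
    next
      case 3
      have "w j = w (j+q)" using per[of 0] by (simp add: eval_nat_numeral)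
      moreover have "w (j+q) = w (j+q+q)" using per[of q] by (simp add: eval_nat_numeral)
      ultimately show ?thesis using lhs 3 by (simp add: factor_nth numeral_2_eq_2 nth_append mult_2 add.assoc)
    qed
  qed
  have ne: "?x \<noteq> []" using q by (simp add: factor_def)
  have pre: "prefix [w j] ?x" using q by (simp add: factor_def upt_conv_Cons)
  have "is_power (factor w j (2*q+1)) (of_nat 2 + of_nat (length [w j]) / of_nat (length ?x))"
    unfolding is_power_def using ne pre eq by blast
  moreover have "(of_nat 2 + of_nat (length [w j]) / of_nat (length ?x) :: rat) > 2"
    using q by (simp add: factor_def)
  ultimately have "overlap (factor w j (2*q+1))" unfolding overlap_def by blast
  thus False using of unfolding overlap_free_inf_def by blast
qed

lemma upto_cases:
  "(k::nat) \<le> 8 \<Longrightarrow> k=0 \<or> k=1 \<or> k=2 \<or> k=3 \<or> k=4 \<or> k=5 \<or> k=6 \<or> k=7 \<or> k=8"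
  by arith

lemma P1:
  fixes w :: "nat \<Rightarrow> 'a"
  assumes "overlap_free_inf w"
  shows "\<not>(w j = w (j+1) \<and> w (j+1) = w (j+2))"
proof
  assume h: "w j = w (j+1) \<and> w (j+1) = w (j+2)"
  show False
    by (rule periodP[OF assms, of 1 j]) (use h upto_cases in \<open>auto simp: le_Suc_eq\<close>)
qed

lemma P2:
  fixes w :: "nat \<Rightarrow> 'a"
  assumes "overlap_free_inf w"
  shows "\<not>(w j = w (j+2) \<and> w (j+1) = w (j+3) \<and> w (j+2) = w (j+4))"
proof
  assume h: "w j = w (j+2) \<and> w (j+1) = w (j+3) \<and> w (j+2) = w (j+4)"
  show False
  proof (rule periodP[OF assms, of 2 j])
    fix k :: nat assume "k \<le> 2"
    hence "k=0 \<or> k=1 \<or> k=2 \<or> k=3 \<or> k=4 \<or> k=5 \<or> k=6 \<or> k=7 \<or> k=8" by arith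
    then show "w (j+k) = w (j+k+2)" using h \<open>k \<le> 2\<close> by (elim disjE) (simp_all add: eval_nat_numeral ac_simps)
  qed simp
qed

lemma P3:
  fixes w :: "nat \<Rightarrow> 'a"
  assumes "overlap_free_inf w"
  shows "\<not>(w j = w (j+3) \<and> w (j+1) = w (j+4) \<and> w (j+2) = w (j+5) \<and> w (j+3) = w (j+6))"
proof
  assume h: "w j = w (j+3) \<and> w (j+1) = w (j+4) \<and> w (j+2) = w (j+5) \<and> w (j+3) = w (j+6)"
  show False
  proof (rule periodP[OF assms, of 3 j])
    fix k :: nat assume "k \<le> 3"
    hence "k=0 \<or> k=1 \<or> k=2 \<or> k=3 \<or> k=4 \<or> k=5 \<or> k=6 \<or> k=7 \<or> k=8" by arith
    then show "w (j+k) = w (j+k+3)" using h \<open>k \<le> 3\<close> by (elim disjE) (simp_all add: eval_nat_numeral ac_simps)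
  qed simp
qed

lemma P4:
  fixes w :: "nat \<Rightarrow> 'a"
  assumes "overlap_free_inf w"
  shows "\<not>(w j = w (j+4) \<and> w (j+1) = w (j+5) \<and> w (j+2) = w (j+6) \<and> w (j+3) = w (j+7) \<and> w (j+4) = w (j+8))"
proof
  assume h: "w j = w (j+4) \<and> w (j+1) = w (j+5) \<and> w (j+2) = w (j+6) \<and> w (j+3) = w (j+7) \<and> w (j+4) = w (j+8)"
  show False
  proof (rule periodP[OF assms, of 4 j])
    fix k :: nat assume "k \<le> 4"
    hence "k=0 \<or> k=1 \<or> k=2 \<or> k=3 \<or> k=4 \<or> k=5 \<or> k=6 \<or> k=7 \<or> k=8" by arith
    then show "w (j+k) = w (j+k+4)" using h \<open>k \<le> 4\<close> by (elim disjE) (simp_all add: eval_nat_numeral ac_simps)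
  qed simp
qed

lemma P8:
  fixes w :: "nat \<Rightarrow> 'a"
  assumes "overlap_free_inf w"
  shows "\<not>(w j = w (j+8) \<and> w (j+1) = w (j+9) \<and> w (j+2) = w (j+10) \<and> w (j+3) = w (j+11) \<and> w (j+4) = w (j+12) \<and> w (j+5) = w (j+13) \<and> w (j+6) = w (j+14) \<and> w (j+7) = w (j+15) \<and> w (j+8) = w (j+16))"
proof
  assume h: "w j = w (j+8) \<and> w (j+1) = w (j+9) \<and> w (j+2) = w (j+10) \<and> w (j+3) = w (j+11) \<and> w (j+4) = w (j+12) \<and> w (j+5) = w (j+13) \<and> w (j+6) = w (j+14) \<and> w (j+7) = w (j+15) \<and> w (j+8) = w (j+16)"
  show False
  proof (rule periodP[OF assms, of 8 j])
    fix k :: nat assume "k \<le> 8"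
    hence "k=0 \<or> k=1 \<or> k=2 \<or> k=3 \<or> k=4 \<or> k=5 \<or> k=6 \<or> k=7 \<or> k=8" by arith
    then show "w (j+k) = w (j+k+8)" using h \<open>k \<le> 8\<close> by (elim disjE) (simp_all add: eval_nat_numeral ac_simps)
  qed simp
qed

lemma chain:
  fixes a :: "nat \<Rightarrow> bool"
  assumes no3: "\<And>t. \<not>(a (t+0) = a (t+1) \<and> a (t+1) = a (t+2))"
  and no9: "\<And>t. \<not> (a (t + 0) = a (t + 4) \<and>
             a (t + 1) = a (t + 5) \<and>
             a (t + 2) = a (t + 6) \<and>
             a (t + 3) = a (t + 7) \<and> a (t + 4) = a (t + 8))"
  and m: "a m = a (m+1)"
  shows "\<exists>m'. a m' = a(m'+1) \<and> a(m'+3) = a m'"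
proof -
  define c where "c k = a (m+k)" for k
  have n3: "\<not>(c k = c (k+1) \<and> c(k+1) = c(k+2))" for k
    using no3[of "m+k"] by (simp add: c_def add.assoc)
  have n9: "\<not>(c 0 = c 4 \<and> c 1 = c 5 \<and> c 2 = c 6 \<and> c 3 = c 7 \<and> c 4 = c 8)"
    using no9[of m] by (simp add: c_def)
  have c0: "c 0 = c 1" using m by (simp add: c_def)
  have s0: "\<not>(c 0 = c 1 \<and> c 1 = c 2)" using n3[of 0] by (simp add: numeral_2_eq_2)
  have s2: "\<not>(c 2 = c 3 \<and> c 3 = c 4)" using n3[of 2] by simp
  have s4: "\<not>(c 4 = c 5 \<and> c 5 = c 6)" using n3[of 4] by simp
  have s6: "\<not>(c 6 = c 7 \<and> c 7 = c 8)" using n3[of 6] by simp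
  have "(c 0 = c 1 \<and> c 3 = c 0) \<or> (c 2 = c 3 \<and> c 5 = c 2) \<or> (c 4 = c 5 \<and> c 7 = c 4) \<or> (c 6 = c 7 \<and> c 9 = c 6)"
    using c0 s0 s2 s4 s6 n9 by (smt (verit))
  then show ?thesis
  proof (elim disjE)
    assume "c 0 = c 1 \<and> c 3 = c 0" then show ?thesis by (intro exI[of _ m]) (simp add: c_def)
  next
    assume h: "c 2 = c 3 \<and> c 5 = c 2"
    have eq: "m+2+1 = m+3" "m+2+3 = m+5" by simp_all
    have "a (m+2) = a(m+2+1) \<and> a(m+2+3) = a(m+2)" unfolding eq using h unfolding c_def .
    then show ?thesis by blast
  next
    assume h: "c 4 = c 5 \<and> c 7 = c 4"
    have eq: "m+4+1 = m+5" "m+4+3 = m+7" by simp_all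
    have "a (m+4) = a(m+4+1) \<and> a(m+4+3) = a(m+4)" unfolding eq using h unfolding c_def .
    then show ?thesis by blast
  next
    assume h: "c 6 = c 7 \<and> c 9 = c 6"
    have eq: "m+6+1 = m+7" "m+6+3 = m+9" by simp_all
    have "a (m+6) = a(m+6+1) \<and> a(m+6+3) = a(m+6)" unfolding eq using h unfolding c_def .
    then show ?thesis by blast
  qed
qed

lemma search:
  fixes b :: "nat \<Rightarrow> bool"
  assumes blk: "\<And>t. b (2*t) \<noteq> b (2*t+1)"
   and p2: "\<And>j. \<not>(b (j+0) = b (j+2) \<and> b (j+1) = b (j+3) \<and> b (j+2) = b (j+4))"
   and p4: "\<And>j. \<not>(b (j+0) = b (j+4) \<and> b (j+1) = b (j+5) \<and> b (j+2) = b (j+6) \<and> b (j+3) = b (j+7) \<and> b (j+4) = b (j+8))"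
   and p8: "\<And>j. \<not>(b (j+0) = b (j+8) \<and> b (j+1) = b (j+9) \<and> b (j+2) = b (j+10) \<and> b (j+3) = b (j+11) \<and> b (j+4) = b (j+12) \<and> b (j+5) = b (j+13) \<and> b (j+6) = b (j+14) \<and> b (j+7) = b (j+15) \<and> b (j+8) = b (j+16))"
  shows "\<exists>m. b(2*m) = b(2*m+2) \<and> b(2*m+6) = b(2*m)"
proof -
  define a where "a t = b(2*t)" for t
  have e0: "b(2*t) = a t" for t unfolding a_def by (rule refl)
  have o0: "b(2*t+1) = (\<not> a t)" for t using blk[of t] unfolding a_def by blast
  have e1: "b(2*t+2) = a(t+1)" for t
  proof -
    have q1: "2*(t+1) = 2*t+2" by simp
    show ?thesis unfolding a_def q1 by (rule refl)
  qed
  have o1: "b(2*t+3) = (\<not> a(t+1))" for t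
  proof -
    have q1: "2*(t+1) = 2*t+2" "2*t+2+1 = 2*t+3" by simp_all
    show ?thesis using blk[of "t+1", unfolded q1] unfolding a_def q1 by blast
  qed
  have e2: "b(2*t+4) = a(t+2)" for t
  proof -
    have q1: "2*(t+2) = 2*t+4" by simp
    show ?thesis unfolding a_def q1 by (rule refl)
  qed
  have o2: "b(2*t+5) = (\<not> a(t+2))" for t
  proof -
    have q1: "2*(t+2) = 2*t+4" "2*t+4+1 = 2*t+5" by simp_all
    show ?thesis using blk[of "t+2", unfolded q1] unfolding a_def q1 by blast
  qed
  have e3: "b(2*t+6) = a(t+3)" for t
  proof -
    have q1: "2*(t+3) = 2*t+6" by simp
    show ?thesis unfolding a_def q1 by (rule refl)
  qed
  have o3: "b(2*t+7) = (\<not> a(t+3))" for t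
  proof -
    have q1: "2*(t+3) = 2*t+6" "2*t+6+1 = 2*t+7" by simp_all
    show ?thesis using blk[of "t+3", unfolded q1] unfolding a_def q1 by blast
  qed
  have e4: "b(2*t+8) = a(t+4)" for t
  proof -
    have q1: "2*(t+4) = 2*t+8" by simp
    show ?thesis unfolding a_def q1 by (rule refl)
  qed
  have o4: "b(2*t+9) = (\<not> a(t+4))" for t
  proof -
    have q1: "2*(t+4) = 2*t+8" "2*t+8+1 = 2*t+9" by simp_all
    show ?thesis using blk[of "t+4", unfolded q1] unfolding a_def q1 by blast
  qed
  have e5: "b(2*t+10) = a(t+5)" for t
  proof -
    have q1: "2*(t+5) = 2*t+10" by simp
    show ?thesis unfolding a_def q1 by (rule refl)
  qed
  have o5: "b(2*t+11) = (\<not> a(t+5))" for t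
  proof -
    have q1: "2*(t+5) = 2*t+10" "2*t+10+1 = 2*t+11" by simp_all
    show ?thesis using blk[of "t+5", unfolded q1] unfolding a_def q1 by blast
  qed
  have e6: "b(2*t+12) = a(t+6)" for t
  proof -
    have q1: "2*(t+6) = 2*t+12" by simp
    show ?thesis unfolding a_def q1 by (rule refl)
  qed
  have o6: "b(2*t+13) = (\<not> a(t+6))" for t
  proof -
    have q1: "2*(t+6) = 2*t+12" "2*t+12+1 = 2*t+13" by simp_all
    show ?thesis using blk[of "t+6", unfolded q1] unfolding a_def q1 by blast
  qed
  have e7: "b(2*t+14) = a(t+7)" for t
  proof -
    have q1: "2*(t+7) = 2*t+14" by simp
    show ?thesis unfolding a_def q1 by (rule refl)
  qed
  have o7: "b(2*t+15) = (\<not> a(t+7))" for t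
  proof -
    have q1: "2*(t+7) = 2*t+14" "2*t+14+1 = 2*t+15" by simp_all
    show ?thesis using blk[of "t+7", unfolded q1] unfolding a_def q1 by blast
  qed
  have e8: "b(2*t+16) = a(t+8)" for t
  proof -
    have q1: "2*(t+8) = 2*t+16" by simp
    show ?thesis unfolding a_def q1 by (rule refl)
  qed
  have o8: "b(2*t+17) = (\<not> a(t+8))" for t
  proof -
    have q1: "2*(t+8) = 2*t+16" "2*t+16+1 = 2*t+17" by simp_all
    show ?thesis using blk[of "t+8", unfolded q1] unfolding a_def q1 by blast
  qed
  have no3: "\<not>(a (t+0) = a (t+1) \<and> a (t+1) = a (t+2))" for t
    using p2[of "2*t"] e0[of t] e1[of t] e2[of t] o0[of t] o1[of t] o2[of t] by auto
  have no5: "\<not>(a (t+0) = a (t+2) \<and> a (t+1) = a (t+3) \<and> a (t+2) = a (t+4))" for t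
    using p4[of "2*t"] e0[of t] e1[of t] e2[of t] e3[of t] e4[of t] o0[of t] o1[of t] o2[of t] o3[of t] o4[of t] by auto
  have no9: "\<not>(a (t+0) = a (t+4) \<and> a (t+1) = a (t+5) \<and> a (t+2) = a (t+6) \<and> a (t+3) = a (t+7) \<and> a (t+4) = a (t+8))" for t
    using p8[of "2*t"] e0[of t] e1[of t] e2[of t] e3[of t] e4[of t] e5[of t] e6[of t] e7[of t] e8[of t] o0[of t] o1[of t] o2[of t] o3[of t] o4[of t] o5[of t] o6[of t] o7[of t] o8[of t] by auto
  have "\<exists>m. a m = a (m+1)"
  proof (rule ccontr)
    assume "\<not> (\<exists>m. a m = a (m+1))"
    hence n: "\<And>m. a m \<noteq> a (m+1)" by blast
    have "a 0 \<noteq> a 1" "a 1 \<noteq> a 2" "a 2 \<noteq> a 3" "a 3 \<noteq> a 4"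
      using n[of 0] n[of 1] n[of 2] n[of 3] by (simp_all add: numeral_2_eq_2 numeral_3_eq_3 eval_nat_numeral)
    moreover have "\<not> (a 0 = a 2 \<and> a 1 = a 3 \<and> a 2 = a 4)" using no5[of 0] by (simp add: numeral_2_eq_2)
    ultimately show False by (smt (verit))
  qed
  then obtain m where m: "a m = a (m+1)" by blast
  obtain m' where "a m' = a(m'+1) \<and> a(m'+3) = a m'"
    using chain[of a m] no3 no9 m by blast
  then show ?thesis
    using e0[of m'] e1[of m'] e3[of m'] by (intro exI[of _ m']) simp
qed

lemma parityA:
  fixes w :: "nat \<Rightarrow> bool"
  assumes of: "overlap_free_inf w"
  shows "1 \<le> m \<Longrightarrow> w m = w (m+1) \<Longrightarrow> w (m+d) = w (m+d+1) \<Longrightarrow> even d"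
proof (induction d arbitrary: m rule: less_induct)
  case (less d)
  show ?case
  proof (cases "\<exists>k. 0<k \<and> k<d \<and> w(m+k) = w(m+k+1)")
    case True
    then obtain k where k: "0<k" "k<d" "w(m+k) = w(m+k+1)" by blast
    have ek: "even k" using less.IH[of k m] k less.prems by simp
    have eq: "m+k+(d-k) = m+d" using k by simp
    have "even (d-k)" using less.IH[of "d-k" "m+k"] k less.prems unfolding eq by simp
    with ek k show ?thesis by presburger
  next
    case False
    hence alt: "\<And>k. 0<k \<Longrightarrow> k<d \<Longrightarrow> w(m+k) \<noteq> w(m+k+1)" by blast
    consider "d=0" | "d=1" | "d=2" | "d=3" | "d=4" | "d\<ge>5" by arith
    then show ?thesis
    proof cases
      case 2
      have "w m = w (m+1) \<and> w (m+1) = w (m+2)" using less.prems 2 by (simp add: numeral_2_eq_2)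
      then show ?thesis using P1[OF of, of m] by blast
    next
      case 4
      obtain m' where mm: "m = m'+1" using less.prems(1) by (metis add.commute le_add_diff_inverse)
      have f0: "w(m'+1) = w(m'+2)" using less.prems(2) unfolding mm by (simp add: numeral_2_eq_2)
      have f1: "w(m'+2) \<noteq> w(m'+3)" using alt[of 1] 4 unfolding mm by (simp add: numeral_2_eq_2 numeral_3_eq_3)
      have f2: "w(m'+3) \<noteq> w(m'+4)" using alt[of 2] 4 unfolding mm by (simp add: eval_nat_numeral)
      have f3: "w(m'+4) = w(m'+5)" using less.prems(3) 4 unfolding mm by (simp add: eval_nat_numeral)
      have h1: "w m' \<noteq> w(m'+1)"
      proof
        assume "w m' = w(m'+1)"
        thus False using P1[OF of, of m'] f0 by simp
      qed
      have h2: "w(m'+5) \<noteq> w(m'+6)"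
      proof
        assume "w(m'+5) = w(m'+6)"
        moreover have "\<not>(w (m'+4) = w (m'+4+1) \<and> w (m'+4+1) = w (m'+4+2))" using P1[OF of, of "m'+4"] .
        ultimately show False using f3 by (simp add: eval_nat_numeral)
      qed
      have "\<not>(w m' = w (m'+3) \<and> w (m'+1) = w (m'+4) \<and> w (m'+2) = w (m'+5) \<and> w (m'+3) = w (m'+6))"
        using P3[OF of, of m'] by (simp add: eval_nat_numeral)
      then show ?thesis using f0 f1 f2 f3 h1 h2 by (smt (verit))
    next
      case 6
      define j where "j = m+1"
      have a1: "w j \<noteq> w(j+1)" using alt[of 1] 6 unfolding j_def by simp
      have a2: "w (j+1) \<noteq> w(j+2)" using alt[of 2] 6 unfolding j_def by (simp add: eval_nat_numeral)
      have a3: "w (j+2) \<noteq> w(j+3)" using alt[of 3] 6 unfolding j_def by (simp add: eval_nat_numeral)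
      have a4: "w (j+3) \<noteq> w(j+4)" using alt[of 4] 6 unfolding j_def by (simp add: eval_nat_numeral)
      have "\<not>(w j = w (j+2) \<and> w (j+1) = w (j+3) \<and> w (j+2) = w (j+4))"
        using P2[OF of, of j] by simp
      then show ?thesis using a1 a2 a3 a4 by (smt (verit))
    qed simp_all
  qed
qed

lemma square_per:
  assumes "factor w i (2 * length x) = x @ x" "k < length x"
  shows "w (i+k) = w (i+k+length x)"
proof -
  have "factor w i (2 * length x) ! k = w (i+k)" using assms(2) by (intro factor_nth) simp
  moreover have "factor w i (2 * length x) ! (k + length x) = w (i+(k+length x))" using assms(2) by (intro factor_nth) simp
  ultimately show ?thesis using assms by (simp add: nth_append add.assoc)
qed

theorem theorem1:
  fixes w :: "nat \<Rightarrow> bool"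
  assumes "overlap_free_inf w"
  shows "\<exists>i. \<not> square_at w i"
proof -
  note of = assms
  have "\<exists>m0. 1 \<le> m0 \<and> w m0 = w (m0+1)"
  proof (rule ccontr)
    assume "\<not> ?thesis"
    hence n: "\<And>m. 1 \<le> m \<Longrightarrow> w m \<noteq> w (m+1)" by blast
    have "w 1 \<noteq> w 2" using n[of 1] by (simp add: numeral_2_eq_2)
    moreover have "w 2 \<noteq> w 3" using n[of 2] by simp
    moreover have "w 3 \<noteq> w 4" using n[of 3] by simp
    moreover have "w 4 \<noteq> w 5" using n[of 4] by simp
    moreover have "\<not>(w 1 = w 3 \<and> w 2 = w 4 \<and> w 3 = w 5)"
      using P2[OF of, of 1] by (simp add: eval_nat_numeral)
    ultimately show False by (smt (verit))
  qed
  then obtain m0 where m0: "1 \<le> m0" "w m0 = w (m0+1)" by blast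
  define p where "p = m0 + 1"
  have blk: "w (p+2*t) \<noteq> w (p+2*t+1)" for t
  proof
    assume h: "w (p+2*t) = w (p+2*t+1)"
    have "even (2*t+1)"
      using parityA[OF of m0(1) m0(2), of "2*t+1"] h unfolding p_def by (simp add: add.assoc)
    thus False by simp
  qed
  define b where "b k = w (p+k)" for k
  have "\<exists>m. b(2*m) = b(2*m+2) \<and> b(2*m+6) = b(2*m)"
  proof (rule search)
    show "b (2*t) \<noteq> b (2*t+1)" for t using blk[of t] unfolding b_def by (simp add: add.assoc)
    show "\<not>(b (j+0) = b (j+2) \<and> b (j+1) = b (j+3) \<and> b (j+2) = b (j+4))" for j
      using P2[OF of, of "p+j"] unfolding b_def by (simp add: add.assoc)
    show "\<not>(b (j+0) = b (j+4) \<and> b (j+1) = b (j+5) \<and> b (j+2) = b (j+6) \<and> b (j+3) = b (j+7) \<and> b (j+4) = b (j+8))" for j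
      using P4[OF of, of "p+j"] unfolding b_def by (simp add: add.assoc)
    show "\<not>(b (j+0) = b (j+8) \<and> b (j+1) = b (j+9) \<and> b (j+2) = b (j+10) \<and> b (j+3) = b (j+11) \<and> b (j+4) = b (j+12) \<and> b (j+5) = b (j+13) \<and> b (j+6) = b (j+14) \<and> b (j+7) = b (j+15) \<and> b (j+8) = b (j+16))" for j
      using P8[OF of, of "p+j"] unfolding b_def by (simp add: add.assoc)
  qed
  then obtain mm where mm: "b(2*mm) = b(2*mm+2)" "b(2*mm+6) = b(2*mm)" by blast
  define i where "i = p + 2*mm + 1"
  have i1: "1 \<le> i" unfolding i_def by simp
  have bl0: "w (i-1) \<noteq> w i" using blk[of mm] unfolding i_def by simp
  have bl1: "w (i+1) \<noteq> w (i+2)" using blk[of "mm+1"] unfolding i_def by (simp add: algebra_simps numeral_2_eq_2)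
  have C1: "w i \<noteq> w (i+1)"
  proof -
    have "w (i+1) = w (i-1)" using mm(1) unfolding b_def i_def by (simp add: algebra_simps numeral_2_eq_2)
    thus ?thesis using bl0 by simp
  qed
  have C2: "w (i+2) \<noteq> w (i+5)"
  proof -
    have "w (i+5) = w (i-1)" using mm(2) unfolding b_def i_def by (simp add: algebra_simps eval_nat_numeral)
    moreover have "w (i+1) = w (i-1)" using mm(1) unfolding b_def i_def by (simp add: algebra_simps numeral_2_eq_2)
    ultimately show ?thesis using bl1 by simp
  qed
  have "\<not> square_at w i"
  proof
    assume "square_at w i"
    then obtain x where x: "x \<noteq> []" "factor w i (2 * length x) = x @ x" unfolding square_at_def by blast
    define q where "q = length x"
    have q0: "q > 0" using x(1) unfolding q_def by simp
    have per: "\<And>k. k < q \<Longrightarrow> w (i+k) = w (i+k+q)" using square_per[OF x(2)] unfolding q_def by blast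
    have qc: "q = 1 \<or> q = 3 \<or> even q \<or> (odd q \<and> q \<ge> 5)" using q0 by presburger
    then consider "q = 1" | "q = 3" | "even q" | "odd q" "q \<ge> 5" by blast
    then show False
    proof cases
      case 1 then show False using per[of 0] C1 by simp
    next
      case 2
      have e: "i+2+q = i+5" using 2 by simp
      have "w (i+2) = w (i+2+q)" using per[of 2] 2 by linarith
      then show False using C2 unfolding e by blast
    next
      case 3
      then obtain s where s: "q = 2*s" by blast
      have bq: "w (i-1+q) \<noteq> w (i+q)"
      proof -
        have e1: "p + 2*(mm+s) = i - 1 + q" "p + 2*(mm+s) + 1 = i + q" unfolding i_def s by simp_all
        have e2: "i - 1 + q + 1 = i + q" using i1 by simp
        show ?thesis using blk[of "mm+s"] unfolding e1 e2 .
      qed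
      show False
      proof (rule periodP[OF of q0, of "i-1"])
        fix k assume k: "k \<le> q"
        show "w (i-1+k) = w (i-1+k+q)"
        proof (cases k)
          case 0
          have "w (i+q) = w i" using per[of 0] q0 by simp
          then show ?thesis using 0 bl0 bq by simp
        next
          case (Suc k')
          have "w (i+k') = w (i+k'+q)" using per[of k'] k Suc by simp
          moreover have "i-1+k = i+k'" "i-1+k+q = i+k'+q" using Suc i1 by simp_all
          ultimately show ?thesis by simp
        qed
      qed
    next
      case 4
      have "\<exists>k. k+1 < q \<and> w (i+k) = w (i+k+1)"
      proof (rule ccontr)
        assume "\<not> ?thesis"
        hence n: "\<And>k. k+1 < q \<Longrightarrow> w (i+k) \<noteq> w (i+k+1)" by blast
        have "w i \<noteq> w (i+1)" using n[of 0] 4 by simp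
        moreover have "w (i+1) \<noteq> w (i+2)" using n[of 1] 4 by (simp add: add.assoc eval_nat_numeral)
        moreover have "w (i+2) \<noteq> w (i+3)" using n[of 2] 4 by (simp add: add.assoc eval_nat_numeral)
        moreover have "w (i+3) \<noteq> w (i+4)" using n[of 3] 4 by (simp add: add.assoc eval_nat_numeral)
        moreover have "\<not>(w i = w (i+2) \<and> w (i+1) = w (i+3) \<and> w (i+2) = w (i+4))"
          using P2[OF of, of i] by simp
        ultimately show False by (smt (verit))
      qed
      then obtain k where k: "k+1 < q" "w (i+k) = w (i+k+1)" by blast
      have "w (i+k+q) = w (i+k+q+1)"
        using per[of k] per[of "k+1"] k by (simp add: add.assoc add.commute add.left_commute)
      hence "even q" using parityA[OF of _ k(2), of q] i1 by simp
      with 4 show False by simp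
    qed
  qed
  thus ?thesis by blast
qed

end
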